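(* Assume $\lambda^*/n\to0$, $\lambda^*\to\infty$, that $\lambda_j/\lambda^*\to\lambda^0_j\in[0,1]$ and $\sqrt{\lambda^*}/\lambda_j\to\psi_j$ for all $j$, and that $\psi\in\{0,\infty\}^p$. Then every closed proper subset $\mathcal{C}\subsetneq\mathcal{M}$ satisfies $$\lim_{n\to\infty}\inf_{\beta\in\mathbb{R}^p}P_\beta\Big(\beta\in\hat\beta_{AL}-\sqrt{\tfrac{\lambda^*}{n}}\,\mathcal{C}\Big)=0,$$ where $\mathcal{M}=\mathcal{M}(\lambda^0,\psi)$.
   Context: For each $n\ge p$: linear regression model $y=X\beta+\varepsilon$ with $y\in\mathbb{R}^n$, non-stochastic $X\in\mathbb{R}^{n\times p}$ ($p$ fixed) of full column rank, unknown $\beta\in\mathbb{R}^p$, and $\varepsilon$ with i.i.d. components of mean zero and finite variance $\sigma^2>0$; $P_\beta$ is the probability when the true parameter is $\beta$. $X'X/n\to C$ positive definite, and $\sqrt{n}(X'X)^{-1}X'\varepsilon\overset{d}{\longrightarrow}N(0,\sigma^2C^{-1})$. $\hat\beta_{LS}=(X'X)^{-1}X'y$; the events $\{\hat\beta_{LS,j}=0\}$ have probability zero and are excluded. Non-negative tuning parameters $\lambda_j=\lambda_{n,j}$ (each either positive for all large $n$ or zero for all large $n$), $\lambda^*=\max_j\lambda_j$, convention $\sqrt{\lambda^*}/0=\infty$. Adaptive Lasso: $\hat\beta_{AL}=\arg\min_{b\in\mathbb{R}^p}\big(\|y-Xb\|^2+2\sum_{j=1}^p\lambda_j|b_j|/|\hat\beta_{LS,j}|\big)$.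 For $\mu\in[0,\infty)^p$ and $\psi\in[0,\infty]^p$, $\mathcal{M}(\mu,\psi)=\{m\in\mathbb{R}^p:(Cm)_j=0\text{ if }\psi_j=\infty,\ m_j(Cm)_j\le\mu_j\text{ if }\psi_j<\infty\}$. For a set $S$ and scalar $c$, $\hat\beta_{AL}-cS=\{\hat\beta_{AL}-cs:s\in S\}$. *)

theory Defs
  imports "HOL-Probability.Probability"
begin

text \<open>Design: row i (i < n) of the n x p design matrix at sample size n is X n i.\<close>

definition gram :: "(nat \<Rightarrow> nat \<Rightarrow> real ^ 'p) \<Rightarrow> nat \<Rightarrow> real ^ 'p ^ 'p" where
  "gram X n = (\<chi> j k. \<Sum>i<n. X n i $ j * X n i $ k)"

definition full_col_rank :: "(nat \<Rightarrow> nat \<Rightarrow> real ^ 'p) \<Rightarrow> nat \<Rightarrow> bool" where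
  "full_col_rank X n \<longleftrightarrow> (\<forall>b. (\<forall>i<n. X n i \<bullet> b = 0) \<longrightarrow> b = 0)"

definition pos_def_mat :: "real ^ 'p ^ 'p \<Rightarrow> bool" where
  "pos_def_mat A \<longleftrightarrow> transpose A = A \<and> (\<forall>x. x \<noteq> 0 \<longrightarrow> x \<bullet> (A *v x) > 0)"

definition resp :: "(nat \<Rightarrow> nat \<Rightarrow> real ^ 'p) \<Rightarrow> (nat \<Rightarrow> 'a \<Rightarrow> real) \<Rightarrow> nat \<Rightarrow> real ^ 'p \<Rightarrow> 'a \<Rightarrow> nat \<Rightarrow> real" where
  "resp X eps n \<beta> \<omega> i = X n i \<bullet> \<beta> + eps i \<omega>"

definition beta_LS :: "(nat \<Rightarrow> nat \<Rightarrow> real ^ 'p) \<Rightarrow> (nat \<Rightarrow> 'a \<Rightarrow> real) \<Rightarrow> nat \<Rightarrow> real ^ 'p \<Rightarrow> 'a \<Rightarrow> real ^ 'p" where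
  "beta_LS X eps n \<beta> \<omega> = matrix_inv (gram X n) *v (\<Sum>i<n. resp X eps n \<beta> \<omega> i *\<^sub>R X n i)"

definition AL_obj :: "(nat \<Rightarrow> nat \<Rightarrow> real ^ 'p) \<Rightarrow> (nat \<Rightarrow> 'a \<Rightarrow> real) \<Rightarrow> (nat \<Rightarrow> 'p \<Rightarrow> real)
    \<Rightarrow> nat \<Rightarrow> real ^ 'p \<Rightarrow> 'a \<Rightarrow> real ^ 'p \<Rightarrow> real" where
  "AL_obj X eps lam n \<beta> \<omega> b =
     (\<Sum>i<n. (resp X eps n \<beta> \<omega> i - X n i \<bullet> b)\<^sup>2)
     + 2 * (\<Sum>j\<in>UNIV. lam n j * \<bar>b $ j\<bar> / \<bar>beta_LS X eps n \<beta> \<omega> $ j\<bar>)"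

text \<open>Adaptive Lasso estimator: a minimiser of the objective (unique under full column rank).\<close>
definition beta_AL :: "(nat \<Rightarrow> nat \<Rightarrow> real ^ 'p) \<Rightarrow> (nat \<Rightarrow> 'a \<Rightarrow> real) \<Rightarrow> (nat \<Rightarrow> 'p \<Rightarrow> real)
    \<Rightarrow> nat \<Rightarrow> real ^ 'p \<Rightarrow> 'a \<Rightarrow> real ^ 'p" where
  "beta_AL X eps lam n \<beta> \<omega> =
     (SOME b. \<forall>b'. AL_obj X eps lam n \<beta> \<omega> b \<le> AL_obj X eps lam n \<beta> \<omega> b')"

definition lamstar :: "(nat \<Rightarrow> 'p::finite \<Rightarrow> real) \<Rightarrow> nat \<Rightarrow> real" where
  "lamstar lam n = Max (range (lam n))"

text \<open>sqrt(lambda*)/lambda_j with the convention sqrt(lambda*)/0 = infinity.\<close>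
definition psi_ratio :: "(nat \<Rightarrow> 'p::finite \<Rightarrow> real) \<Rightarrow> nat \<Rightarrow> 'p \<Rightarrow> ereal" where
  "psi_ratio lam n j = (if lam n j = 0 then \<infinity> else ereal (sqrt (lamstar lam n) / lam n j))"

definition Mset :: "real ^ 'p ^ 'p \<Rightarrow> ('p \<Rightarrow> real) \<Rightarrow> ('p \<Rightarrow> ereal) \<Rightarrow> (real ^ 'p) set" where
  "Mset C \<mu> \<psi> = {m. \<forall>j. (\<psi> j = \<infinity> \<longrightarrow> (C *v m) $ j = 0) \<and>
                          (\<psi> j < \<infinity> \<longrightarrow> m $ j * (C *v m) $ j \<le> \<mu> j)}"

definition gauss_density :: "real ^ 'p ^ 'p \<Rightarrow> real ^ 'p \<Rightarrow> real" where
  "gauss_density \<Sigma> x = (2 * pi) powr (- real CARD('p) / 2) / sqrt (det \<Sigma>)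
      * exp (- (x \<bullet> (matrix_inv \<Sigma> *v x)) / 2)"

definition conv_distr_to_density ::
    "'a measure \<Rightarrow> (nat \<Rightarrow> 'a \<Rightarrow> real ^ 'p) \<Rightarrow> (real ^ 'p \<Rightarrow> real) \<Rightarrow> bool" where
  "conv_distr_to_density M Z f \<longleftrightarrow>
     (\<forall>g::real ^ 'p \<Rightarrow> real. continuous_on UNIV g \<longrightarrow> bounded (range g) \<longrightarrow>
        (\<lambda>n. \<integral>\<omega>. g (Z n \<omega>) \<partial>M) \<longlonglongrightarrow> (\<integral>x. f x * g x \<partial>lborel))"

end

theory Submission
  imports Defs
begin



lemma (in prob_space) pair_indep:
  assumes ind: "indep_vars (\<lambda>_. borel) eps UNIV" and "i \<noteq> k"
    and meas: "\<And>i. eps i \<in> borel_measurable M"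
  shows "indep_var borel (eps i :: 'a \<Rightarrow> real) borel (eps k)"
proof -
  have "indep_var (PiM {i} (\<lambda>_. borel)) (\<lambda>\<omega>. restrict (\<lambda>i. eps i \<omega>) {i})
                  (PiM {k} (\<lambda>_. borel)) (\<lambda>\<omega>. restrict (\<lambda>i. eps i \<omega>) {k})"
    by (rule indep_var_restrict[OF ind]) (use assms in auto)
  then have "indep_var borel ((\<lambda>f. f i) \<circ> (\<lambda>\<omega>. restrict (\<lambda>i. eps i \<omega>) {i}))
                  borel ((\<lambda>f. f k) \<circ> (\<lambda>\<omega>. restrict (\<lambda>i. eps i \<omega>) {k}))"
    by (rule indep_var_compose) auto
  then show ?thesis by (simp add: o_def)
qed

lemma (in prob_space) second_moment:
  fixes eps :: "nat \<Rightarrow> 'a \<Rightarrow> real"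
  assumes eps_meas: "\<And>i. eps i \<in> borel_measurable M"
    and eps_indep: "indep_vars (\<lambda>_. borel) eps UNIV"
    and eps_ident: "\<And>i. distr M borel (eps i) = distr M borel (eps 0)"
    and eps_int: "integrable M (eps 0)"
    and eps_mean: "(\<integral>\<omega>. eps 0 \<omega> \<partial>M) = 0"
    and eps_sq_int: "integrable M (\<lambda>\<omega>. (eps 0 \<omega>)\<^sup>2)"
    and eps_var: "(\<integral>\<omega>. (eps 0 \<omega>)\<^sup>2 \<partial>M) = \<sigma>\<^sup>2"
  shows "integrable M (\<lambda>\<omega>. (\<Sum>i<n. a i * eps i \<omega>)\<^sup>2) \<and>
         (\<integral>\<omega>. (\<Sum>i<n. a i * eps i \<omega>)\<^sup>2 \<partial>M) = \<sigma>\<^sup>2 * (\<Sum>i<n. (a i)\<^sup>2)"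
proof -
  have int1: "integrable M (eps i)" for i
  proof -
    have "integrable (distr M borel (eps 0)) (\<lambda>x. x)"
      using eps_int by (subst integrable_distr_eq) (auto simp: eps_meas)
    then have "integrable (distr M borel (eps i)) (\<lambda>x. x)" by (simp add: eps_ident[of i])
    then show ?thesis by (subst (asm) integrable_distr_eq) (auto simp: eps_meas)
  qed
  have int2: "integrable M (\<lambda>\<omega>. (eps i \<omega>)\<^sup>2)" for i
  proof -
    have "integrable (distr M borel (eps 0)) (\<lambda>x. x\<^sup>2)"
      using eps_sq_int by (subst integrable_distr_eq) (auto simp: eps_meas)
    then have "integrable (distr M borel (eps i)) (\<lambda>x. x\<^sup>2)" by (simp add: eps_ident[of i])
    then show ?thesis by (subst (asm) integrable_distr_eq) (auto simp: eps_meas)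
  qed
  have mean: "(\<integral>\<omega>. eps i \<omega> \<partial>M) = 0" for i
  proof -
    have "(\<integral>\<omega>. eps i \<omega> \<partial>M) = integral\<^sup>L (distr M borel (eps i)) (\<lambda>x. x)"
      by (subst integral_distr) (auto simp: eps_meas)
    also have "\<dots> = integral\<^sup>L (distr M borel (eps 0)) (\<lambda>x. x)" by (simp add: eps_ident[of i])
    also have "\<dots> = 0" using eps_mean by (subst integral_distr) (auto simp: eps_meas)
    finally show ?thesis .
  qed
  have var: "(\<integral>\<omega>. (eps i \<omega>)\<^sup>2 \<partial>M) = \<sigma>\<^sup>2" for i
  proof -
    have "(\<integral>\<omega>. (eps i \<omega>)\<^sup>2 \<partial>M) = integral\<^sup>L (distr M borel (eps i)) (\<lambda>x. x\<^sup>2)"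
      by (subst integral_distr) (auto simp: eps_meas)
    also have "\<dots> = integral\<^sup>L (distr M borel (eps 0)) (\<lambda>x. x\<^sup>2)" by (simp add: eps_ident[of i])
    also have "\<dots> = \<sigma>\<^sup>2" using eps_var by (subst integral_distr) (auto simp: eps_meas)
    finally show ?thesis .
  qed
  have prod_int: "integrable M (\<lambda>\<omega>. eps i \<omega> * eps k \<omega>)" for i k
  proof (cases "i = k")
    case True then show ?thesis using int2[of i] by (simp add: power2_eq_square)
  next
    case False then show ?thesis
      using indep_var_integrable[OF pair_indep[OF eps_indep False eps_meas] int1 int1] by simp
  qed
  have prod_E: "(\<integral>\<omega>. eps i \<omega> * eps k \<omega> \<partial>M) = (if i = k then \<sigma>\<^sup>2 else 0)" for i k
  proof (cases "i = k")
    case True then show ?thesis using var[of i] by (simp add: power2_eq_square)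
  next
    case False then show ?thesis
      using indep_var_lebesgue_integral[OF pair_indep[OF eps_indep False eps_meas] int1 int1] mean by simp
  qed
  have sq: "(\<Sum>i<n. a i * eps i \<omega>)\<^sup>2 = (\<Sum>i<n. \<Sum>k<n. (a i * a k) * (eps i \<omega> * eps k \<omega>))" for \<omega>
    by (simp add: power2_eq_square sum_product mult_ac)
  have "integrable M (\<lambda>\<omega>. \<Sum>i<n. \<Sum>k<n. (a i * a k) * (eps i \<omega> * eps k \<omega>))"
    using prod_int by simp
  moreover have "(\<integral>\<omega>. (\<Sum>i<n. \<Sum>k<n. (a i * a k) * (eps i \<omega> * eps k \<omega>)) \<partial>M)
      = (\<Sum>i<n. \<Sum>k<n. (a i * a k) * (if i = k then \<sigma>\<^sup>2 else 0))"
    using prod_int prod_E by (simp add: integral_sum integrable_sum)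
  moreover have "(\<Sum>i<n. \<Sum>k<n. (a i * a k) * (if i = k then \<sigma>\<^sup>2 else (0::real))) = \<sigma>\<^sup>2 * (\<Sum>i<n. (a i)\<^sup>2)"
    by (simp add: sum_distrib_left power2_eq_square mult_ac if_distrib sum.If_cases)
  ultimately show ?thesis unfolding sq by simp
qed


lemma gram_mult: "gram X n *v b = (\<Sum>i<n. (X n i \<bullet> b) *\<^sub>R X n i)"
  unfolding gram_def
  by (simp add: vec_eq_iff matrix_vector_mult_def inner_vec_def sum_distrib_left sum_distrib_right
      sum.swap[of _ UNIV] mult_ac)

lemma gram_quad: "b \<bullet> (gram X n *v b) = (\<Sum>i<n. (X n i \<bullet> b)\<^sup>2)"
  by (simp add: gram_mult inner_sum_right power2_eq_square inner_commute)

lemma gram_transpose: "transpose (gram X n) = gram X n"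
  unfolding gram_def transpose_def by (simp add: vec_eq_iff mult.commute)

lemma inv_props:
  assumes "invertible (A::real^'n^'n)"
  shows "A ** matrix_inv A = mat 1" "matrix_inv A ** A = mat 1"
proof -
  have "\<exists>A'. A ** A' = mat 1 \<and> A' ** A = mat 1" using assms unfolding invertible_def by auto
  from someI_ex[OF this] show "A ** matrix_inv A = mat 1" "matrix_inv A ** A = mat 1"
    unfolding matrix_inv_def by auto
qed

lemma invertible_lb:
  fixes A :: "real^'n^'n"
  assumes "\<And>x. \<kappa> * (norm x)\<^sup>2 \<le> x \<bullet> (A *v x)" "\<kappa> > 0"
  shows "invertible A"
proof -
  have "\<forall>x. A *v x = 0 \<longrightarrow> x = 0"
  proof (intro allI impI)
    fix x assume "A *v x = 0"
    then have "\<kappa> * (norm x)\<^sup>2 \<le> 0" using assms(1)[of x] by simp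
    then show "x = 0" using assms(2) by (simp add: mult_le_0_iff)
  qed
  then show ?thesis
    by (simp add: invertible_left_inverse matrix_left_invertible_ker)
qed

lemma inv_quad_bound:
  fixes A :: "real^'n^'n"
  assumes "\<And>x. \<kappa> * (norm x)\<^sup>2 \<le> x \<bullet> (A *v x)" "\<kappa> > 0"
  shows "y \<bullet> (matrix_inv A *v y) \<le> (norm y)\<^sup>2 / \<kappa>"
proof -
  define x where "x = matrix_inv A *v y"
  have Ax: "A *v x = y"
    using inv_props(1)[OF invertible_lb[OF assms]] unfolding x_def
    by (simp add: matrix_vector_mul_assoc)
  have "\<kappa> * (norm x)\<^sup>2 \<le> y \<bullet> x" using assms(1)[of x] Ax by (simp add: inner_commute)
  also have "\<dots> \<le> norm y * norm x" by (rule norm_cauchy_schwarz)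
  finally have 1: "\<kappa> * (norm x)\<^sup>2 \<le> norm y * norm x" .
  have "\<kappa> * norm x \<le> norm y"
  proof (cases "x = 0")
    case True then show ?thesis by simp
  next
    case False
    then have "norm x > 0" by simp
    with 1 show ?thesis by (simp add: power2_eq_square)
  qed
  then have "norm x \<le> norm y / \<kappa>" using assms(2) by (simp add: field_simps)
  have "y \<bullet> x \<le> norm y * norm x" by (rule norm_cauchy_schwarz)
  also have "\<dots> \<le> norm y * (norm y / \<kappa>)"
    using \<open>norm x \<le> norm y / \<kappa>\<close> by (intro mult_left_mono) auto
  finally show ?thesis unfolding x_def by (simp add: power2_eq_square)
qed

lemma mv_bound:
  fixes A :: "real^'n^'m"
  shows "norm (A *v x) \<le> (\<Sum>i\<in>UNIV. \<Sum>j\<in>UNIV. \<bar>A $ i $ j\<bar>) * norm x"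
proof -
  have "norm (A *v x) \<le> (\<Sum>i\<in>UNIV. \<bar>(A *v x) $ i\<bar>)"
    by (rule norm_le_l1_cart)
  also have "\<dots> \<le> (\<Sum>i\<in>UNIV. \<Sum>j\<in>UNIV. \<bar>A $ i $ j\<bar> * norm x)"
  proof (rule sum_mono)
    fix i
    have "\<bar>(A *v x) $ i\<bar> \<le> \<bar>\<Sum>j\<in>UNIV. A $ i $ j * x $ j\<bar>"
      by (simp add: matrix_vector_mult_def)
    also have "\<dots> \<le> (\<Sum>j\<in>UNIV. \<bar>A $ i $ j * x $ j\<bar>)"
      by (rule sum_abs)
    also have "\<dots> \<le> (\<Sum>j\<in>UNIV. \<bar>A $ i $ j\<bar> * norm x)"
      by (rule sum_mono) (simp add: abs_mult component_le_norm_cart mult_left_mono)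
    finally show "\<bar>(A *v x) $ i\<bar> \<le> (\<Sum>j\<in>UNIV. \<bar>A $ i $ j\<bar> * norm x)" .
  qed
  finally show ?thesis
    by (simp add: sum_distrib_right)
qed

lemma pd_lower:
  fixes C :: "real^'n^'n"
  assumes "pos_def_mat C"
  shows "\<exists>c>0. \<forall>x. c * (norm x)\<^sup>2 \<le> x \<bullet> (C *v x)"
proof -
  have cont: "continuous_on (sphere 0 1) (\<lambda>x::real^'n. x \<bullet> (C *v x))"
    by (intro continuous_intros continuous_on_id linear_continuous_on) auto
  have ne: "sphere (0::real^'n) 1 \<noteq> {}" by simp
  obtain x0 where x0: "x0 \<in> sphere 0 1" "\<And>y. y \<in> sphere 0 1 \<Longrightarrow> x0 \<bullet> (C *v x0) \<le> y \<bullet> (C *v y)"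
    using continuous_attains_inf[OF compact_sphere ne cont] by blast
  have pos: "x0 \<bullet> (C *v x0) > 0"
    using assms x0(1) unfolding pos_def_mat_def by (metis mem_sphere_0 norm_zero zero_neq_one)
  have "\<forall>x. x0 \<bullet> (C *v x0) * (norm x)\<^sup>2 \<le> x \<bullet> (C *v x)"
  proof
    fix x :: "real^'n"
    show "x0 \<bullet> (C *v x0) * (norm x)\<^sup>2 \<le> x \<bullet> (C *v x)"
    proof (cases "x = 0")
      case True then show ?thesis by simp
    next
      case False
      define u where "u = (1 / norm x) *\<^sub>R x"
      have u: "u \<in> sphere 0 1" using False by (simp add: u_def)
      have xu: "x = norm x *\<^sub>R u" using False by (simp add: u_def)
      have "x \<bullet> (C *v x) = (norm x)\<^sup>2 * (u \<bullet> (C *v u))"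
        by (subst xu, subst xu) (simp add: matrix_vector_mult_scaleR power2_eq_square)
      moreover have "x0 \<bullet> (C *v x0) * (norm x)\<^sup>2 \<le> (u \<bullet> (C *v u)) * (norm x)\<^sup>2"
        using x0(2)[OF u] by (intro mult_right_mono) auto
      ultimately show ?thesis by (simp add: mult.commute)
    qed
  qed
  then show ?thesis using pos by blast
qed



lemma argmin_bound:
  fixes F :: "real^'p \<Rightarrow> real"
  assumes ineq: "\<And>b. F b0 + e \<bullet> (b - b0) + \<kappa> * (norm (b - b0))\<^sup>2 \<le> F b"
    and kp: "\<kappa> > 0" and cont: "continuous_on UNIV F"
  shows "\<exists>b. \<forall>b'. F b \<le> F b'"
    and "(\<forall>b'. F b \<le> F b') \<Longrightarrow> norm (b - b0) \<le> norm e / \<kappa>"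
proof -
  have key: "F b \<le> F b0 \<Longrightarrow> norm (b - b0) \<le> norm e / \<kappa>" for b
  proof -
    assume le: "F b \<le> F b0"
    define d where "d = b - b0"
    have "e \<bullet> d + \<kappa> * (norm d)\<^sup>2 \<le> 0" using ineq[of b] le unfolding d_def by simp
    moreover have "- (norm e * norm d) \<le> e \<bullet> d"
      using norm_cauchy_schwarz[of "-e" d] by simp
    ultimately have 1: "\<kappa> * (norm d)\<^sup>2 \<le> norm e * norm d" by simp
    show "norm (b - b0) \<le> norm e / \<kappa>"
    proof (cases "d = 0")
      case True then show ?thesis using kp unfolding d_def by simp
    next
      case False
      then have "norm d > 0" by simp
      with 1 have "\<kappa> * norm d \<le> norm e" by (simp add: power2_eq_square)
      then show ?thesis using kp unfolding d_def by (simp add: field_simps)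
    qed
  qed
  show "(\<forall>b'. F b \<le> F b') \<Longrightarrow> norm (b - b0) \<le> norm e / \<kappa>"
    using key by blast
  define R where "R = norm e / \<kappa>"
  have ne: "cball b0 R \<noteq> {}" using kp by (simp add: R_def not_less)
  obtain b1 where b1: "b1 \<in> cball b0 R" "\<And>y. y \<in> cball b0 R \<Longrightarrow> F b1 \<le> F y"
    using continuous_attains_inf[OF compact_cball ne continuous_on_subset[OF cont]] by blast
  have "\<forall>b'. F b1 \<le> F b'"
  proof
    fix b'
    show "F b1 \<le> F b'"
    proof (cases "b' \<in> cball b0 R")
      case True then show ?thesis using b1 by blast
    next
      case False
      have "F b1 \<le> F b0" using b1(2)[of b0] ne by (simp add: R_def)
      moreover have "F b0 < F b'"
      proof (rule ccontr)
        assume "\<not> F b0 < F b'"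
        then have "norm (b' - b0) \<le> R" using key[of b'] by (simp add: R_def)
        then show False using False by (simp add: dist_norm norm_minus_commute)
      qed
      ultimately show ?thesis by simp
    qed
  qed
  then show "\<exists>b. \<forall>b'. F b \<le> F b'" by blast
qed

lemma obj_ineq:
  fixes x :: "nat \<Rightarrow> real^'p" and r :: "nat \<Rightarrow> real" and w :: "'p \<Rightarrow> real" and s :: "real^'p"
  assumes sub: "\<And>j t. \<bar>b0 $ j\<bar> + s $ j * (t - b0 $ j) \<le> \<bar>t\<bar>"
    and wpos: "\<And>j. w j \<ge> 0"
    and lb: "\<And>d. \<kappa> * (norm d)\<^sup>2 \<le> (\<Sum>i<n. (x i \<bullet> d)\<^sup>2)"
  defines "e \<equiv> - 2 *\<^sub>R (\<Sum>i<n. (r i - x i \<bullet> b0) *\<^sub>R x i) + 2 *\<^sub>R (\<chi> j. w j * s $ j)"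
  shows "((\<Sum>i<n. (r i - x i \<bullet> b0)\<^sup>2) + 2 * (\<Sum>j\<in>UNIV. w j * \<bar>b0 $ j\<bar>))
          + e \<bullet> (b - b0) + \<kappa> * (norm (b - b0))\<^sup>2
        \<le> (\<Sum>i<n. (r i - x i \<bullet> b)\<^sup>2) + 2 * (\<Sum>j\<in>UNIV. w j * \<bar>b $ j\<bar>)"
proof -
  define d where "d = b - b0"
  have q: "(\<Sum>i<n. (r i - x i \<bullet> b)\<^sup>2) = (\<Sum>i<n. (r i - x i \<bullet> b0)\<^sup>2)
       - 2 * (\<Sum>i<n. (r i - x i \<bullet> b0) * (x i \<bullet> d)) + (\<Sum>i<n. (x i \<bullet> d)\<^sup>2)"
  proof -
    have "(r i - x i \<bullet> b)\<^sup>2 = (r i - x i \<bullet> b0)\<^sup>2 - 2 * ((r i - x i \<bullet> b0) * (x i \<bullet> d)) + (x i \<bullet> d)\<^sup>2" for i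
      unfolding d_def by (simp add: inner_diff_right power2_eq_square algebra_simps)
    then show ?thesis by (simp add: sum.distrib sum_subtractf sum_distrib_left)
  qed
  have p: "(\<Sum>j\<in>UNIV. w j * \<bar>b0 $ j\<bar>) + (\<chi> j. w j * s $ j) \<bullet> d \<le> (\<Sum>j\<in>UNIV. w j * \<bar>b $ j\<bar>)"
  proof -
    have "(\<Sum>j\<in>UNIV. w j * \<bar>b0 $ j\<bar>) + (\<chi> j. w j * s $ j) \<bullet> d
        = (\<Sum>j\<in>UNIV. w j * (\<bar>b0 $ j\<bar> + s $ j * (b $ j - b0 $ j)))"
      unfolding d_def by (simp add: inner_vec_def sum.distrib[symmetric] algebra_simps)
    also have "\<dots> \<le> (\<Sum>j\<in>UNIV. w j * \<bar>b $ j\<bar>)"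
      by (intro sum_mono mult_left_mono sub wpos)
    finally show ?thesis .
  qed
  have ed: "e \<bullet> d = - 2 * (\<Sum>i<n. (r i - x i \<bullet> b0) * (x i \<bullet> d)) + 2 * ((\<chi> j. w j * s $ j) \<bullet> d)"
    unfolding e_def by (simp add: inner_add_left inner_diff_left inner_sum_left)
  show ?thesis using q p ed lb[of d] unfolding d_def[symmetric] by linarith
qed



lemma caseA_bound:
  fixes t \<eta> :: "nat \<Rightarrow> real"
  assumes "\<eta> \<longlonglongrightarrow> 0" "\<forall>\<^sub>F n in sequentially. 0 \<le> t n \<and> t n \<le> 1" "vj = 0"
  shows "\<exists>B. B \<longlonglongrightarrow> 0 \<and> (\<forall>\<^sub>F n in sequentially. \<forall>\<zeta> s. \<bar>\<zeta>\<bar> \<le> \<eta> n \<longrightarrow> \<bar>s\<bar> \<le> 1 \<longrightarrow>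
            \<bar>vj + t n * s / \<bar>real n + \<zeta>\<bar>\<bar> \<le> B n)"
proof (intro exI conjI)
  show "(\<lambda>n. 2 / real n) \<longlonglongrightarrow> 0"
    by (intro tendsto_divide_0[OF tendsto_const] filterlim_at_top_imp_at_infinity filterlim_real_sequentially)
  have "\<forall>\<^sub>F n in sequentially. \<eta> n < 1"
    using assms(1) by (auto simp: order_tendsto_iff)
  moreover have "\<forall>\<^sub>F n in sequentially. n \<ge> 2" by (rule eventually_ge_at_top)
  ultimately show "\<forall>\<^sub>F n in sequentially. \<forall>\<zeta> s. \<bar>\<zeta>\<bar> \<le> \<eta> n \<longrightarrow> \<bar>s\<bar> \<le> 1 \<longrightarrow>
            \<bar>vj + t n * s / \<bar>real n + \<zeta>\<bar>\<bar> \<le> 2 / real n"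
    using assms(2)
  proof eventually_elim
    case (elim n)
    show ?case
    proof (intro allI impI)
      fix \<zeta> s :: real
      assume z: "\<bar>\<zeta>\<bar> \<le> \<eta> n" and s: "\<bar>s\<bar> \<le> 1"
      have "real n \<ge> 2" using elim by simp
      have d: "\<bar>real n + \<zeta>\<bar> \<ge> real n / 2" using z elim by linarith
      have "\<bar>t n * s\<bar> \<le> 1" using s elim by (simp add: abs_mult mult_le_one)
      then have "\<bar>t n * s\<bar> / \<bar>real n + \<zeta>\<bar> \<le> 1 / (real n / 2)"
        using d \<open>real n \<ge> 2\<close> by (intro frac_le) auto
      then show "\<bar>vj + t n * s / \<bar>real n + \<zeta>\<bar>\<bar> \<le> 2 / real n"
        using assms(3) by (simp add: abs_mult)
    qed
  qed
qed

lemma caseB_bound: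
  fixes t \<eta> \<rho> :: "nat \<Rightarrow> real"
  assumes vj: "vj \<noteq> 0" and rho: "\<rho> \<longlonglongrightarrow> 0"
    and ev: "\<forall>\<^sub>F n in sequentially. t n > 0 \<and> \<eta> n \<le> \<rho> n * t n"
  shows "\<exists>B. B \<longlonglongrightarrow> 0 \<and> (\<forall>\<^sub>F n in sequentially. \<forall>\<zeta>. \<bar>\<zeta>\<bar> \<le> \<eta> n \<longrightarrow>
            \<bar>vj + t n * (- sgn vj) / \<bar>- t n / vj + \<zeta>\<bar>\<bar> \<le> B n)"
proof (intro exI conjI)
  show "(\<lambda>n. 2 * vj\<^sup>2 * \<rho> n) \<longlonglongrightarrow> 0"
    using tendsto_mult_right_zero[OF rho, of "2 * vj\<^sup>2"] by simp
  have "\<forall>\<^sub>F n in sequentially. \<bar>vj\<bar> * \<rho> n < 1/2"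
    using order_tendstoD(2)[OF tendsto_mult_right_zero[OF rho, of "\<bar>vj\<bar>"], of "1/2"] by simp
  then show "\<forall>\<^sub>F n in sequentially. \<forall>\<zeta>. \<bar>\<zeta>\<bar> \<le> \<eta> n \<longrightarrow>
            \<bar>vj + t n * (- sgn vj) / \<bar>- t n / vj + \<zeta>\<bar>\<bar> \<le> 2 * vj\<^sup>2 * \<rho> n"
    using ev
  proof eventually_elim
    case (elim n)
    show ?case
    proof (intro allI impI)
      fix \<zeta> :: real
      assume z: "\<bar>\<zeta>\<bar> \<le> \<eta> n"
      define T where "T = t n"
      have T: "T > 0" using elim by (simp add: T_def)
      define a where "a = vj * \<zeta> / T"
      have rho0: "\<rho> n \<ge> 0" using elim z T_def T
        by (metis abs_ge_zero order_trans zero_le_mult_iff linorder_not_less order_less_imp_le)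
      have "\<bar>a\<bar> = \<bar>vj\<bar> * \<bar>\<zeta>\<bar> / T" using T by (simp add: a_def abs_mult)
      also have "\<dots> \<le> \<bar>vj\<bar> * (\<rho> n * T) / T"
        using z elim T by (intro divide_right_mono mult_left_mono) (auto simp: T_def)
      also have "\<dots> = \<bar>vj\<bar> * \<rho> n" using T by simp
      finally have a1: "\<bar>a\<bar> \<le> \<bar>vj\<bar> * \<rho> n" .
      then have a2: "\<bar>a\<bar> < 1/2" using elim by linarith
      have eq1: "- T / vj + \<zeta> = - (T / vj) * (1 - a)"
        using vj T by (simp add: a_def field_simps)
      have n1: "\<bar>1 - a\<bar> \<ge> 1/2" using a2 by linarith
      have eq2: "T * (- sgn vj) / \<bar>- T / vj + \<zeta>\<bar> = - vj / \<bar>1 - a\<bar>"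
      proof -
        have "\<bar>- T / vj + \<zeta>\<bar> = T / \<bar>vj\<bar> * \<bar>1 - a\<bar>"
          unfolding eq1 using T by (simp add: abs_mult)
        then show ?thesis using vj T n1
          by (cases "vj > 0") (auto simp: field_simps)
      qed
      have "\<bar>vj + T * (- sgn vj) / \<bar>- T / vj + \<zeta>\<bar>\<bar> = \<bar>vj\<bar> * \<bar>\<bar>1 - a\<bar> - 1\<bar> / \<bar>1 - a\<bar>"
      proof -
        have nz: "\<bar>1 - a\<bar> \<noteq> 0" using n1 by linarith
        have "vj + - vj / \<bar>1 - a\<bar> = vj * (\<bar>1 - a\<bar> - 1) / \<bar>1 - a\<bar>" using nz by (simp add: field_simps)
        then show ?thesis unfolding eq2 by (simp add: abs_mult abs_divide)
      qed
      also have "\<dots> \<le> \<bar>vj\<bar> * \<bar>a\<bar> / (1/2)"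
        using n1 by (intro frac_le mult_left_mono) auto
      also have "\<dots> \<le> \<bar>vj\<bar> * (\<bar>vj\<bar> * \<rho> n) / (1/2)"
        using a1 by (intro divide_right_mono mult_left_mono) auto
      also have "\<dots> = 2 * vj\<^sup>2 * \<rho> n" by (simp add: power2_eq_square)
      finally show "\<bar>vj + t n * (- sgn vj) / \<bar>- t n / vj + \<zeta>\<bar>\<bar> \<le> 2 * vj\<^sup>2 * \<rho> n"
        by (simp add: T_def)
    qed
  qed
qed

lemma caseC_bound:
  fixes t \<eta> :: "nat \<Rightarrow> real"
  assumes q: "mj * vj > 0" and tl: "t \<longlonglongrightarrow> l0" and ql: "mj * vj \<le> l0" and eta: "\<eta> \<longlonglongrightarrow> 0"
    and tpos: "\<And>n. t n \<ge> 0"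
  shows "\<exists>B. B \<longlonglongrightarrow> 0 \<and> (\<forall>\<^sub>F n in sequentially. \<forall>\<zeta>. \<bar>\<zeta>\<bar> \<le> \<eta> n \<longrightarrow>
            \<bar>vj + t n * (- sgn vj * min 1 (mj * vj / t n)) / \<bar>- mj + \<zeta>\<bar>\<bar> \<le> B n)"
proof -
  define qq where "qq = mj * vj"
  have mj: "mj \<noteq> 0" and vj: "vj \<noteq> 0" using q by auto
  have sg: "sgn vj * qq / \<bar>mj\<bar> = vj"
    using q mj unfolding qq_def
    by (cases "vj > 0") (auto simp: field_simps zero_less_mult_iff)
  define B where "B n = 2 * qq * \<eta> n / mj\<^sup>2 + 2 * max 0 (qq - t n) / \<bar>mj\<bar>" for n
  have "B \<longlonglongrightarrow> 2 * qq * 0 / mj\<^sup>2 + 2 * max 0 (qq - l0) / \<bar>mj\<bar>"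
    unfolding B_def using mj by (intro tendsto_intros eta tl) auto
  moreover have "max 0 (qq - l0) = 0" using ql by (simp add: qq_def)
  ultimately have B0: "B \<longlonglongrightarrow> 0" by simp
  have "\<forall>\<^sub>F n in sequentially. \<eta> n < \<bar>mj\<bar> / 2"
    using order_tendstoD(2)[OF eta, of "\<bar>mj\<bar>/2"] mj by simp
  then have "\<forall>\<^sub>F n in sequentially. \<forall>\<zeta>. \<bar>\<zeta>\<bar> \<le> \<eta> n \<longrightarrow>
            \<bar>vj + t n * (- sgn vj * min 1 (mj * vj / t n)) / \<bar>- mj + \<zeta>\<bar>\<bar> \<le> B n"
  proof eventually_elim
    case (elim n)
    show ?case
    proof (intro allI impI)
      fix \<zeta> :: real
      assume z: "\<bar>\<zeta>\<bar> \<le> \<eta> n"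
      define T where "T = t n"
      have T: "T \<ge> 0" by (simp add: T_def tpos)
      have mn: "T * min 1 (qq / T) = min T qq"
        using T q by (cases "T = 0") (auto simp: qq_def min_def field_simps)
      define d where "d = \<bar>- mj + \<zeta>\<bar>"
      have d1: "d \<ge> \<bar>mj\<bar> / 2" using z elim unfolding d_def by linarith
      have d2: "\<bar>d - \<bar>mj\<bar>\<bar> \<le> \<eta> n" using z unfolding d_def by linarith
      have mjp: "\<bar>mj\<bar> > 0" using mj by simp
      have qp: "qq > 0" using q by (simp add: qq_def)
      have "vj + T * (- sgn vj * min 1 (qq / T)) / d
          = sgn vj * (qq / \<bar>mj\<bar> - qq / d) + sgn vj * (qq - min T qq) / d"
        using sg[symmetric] mn d1 mjp
        by (simp add: field_simps)
      also have "\<dots> = sgn vj * ((qq / \<bar>mj\<bar> - qq / d) + (qq - min T qq) / d)"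
        by (simp add: algebra_simps)
      finally have "\<bar>vj + T * (- sgn vj * min 1 (qq / T)) / d\<bar>
          = \<bar>(qq / \<bar>mj\<bar> - qq / d) + (qq - min T qq) / d\<bar>"
        using vj by (simp add: abs_mult abs_sgn_eq)
      also have "\<dots> \<le> \<bar>qq / \<bar>mj\<bar> - qq / d\<bar> + \<bar>(qq - min T qq) / d\<bar>"
        by (rule abs_triangle_ineq)
      finally have f1: "\<bar>vj + T * (- sgn vj * min 1 (qq / T)) / d\<bar>
          \<le> \<bar>qq / \<bar>mj\<bar> - qq / d\<bar> + \<bar>qq - min T qq\<bar> / d"
        using d1 mjp by (simp add: abs_divide)
      have "\<bar>qq / \<bar>mj\<bar> - qq / d\<bar> = qq * \<bar>d - \<bar>mj\<bar>\<bar> / (\<bar>mj\<bar> * d)"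
      proof -
        have dp: "d > 0" using d1 mjp by linarith
        have "qq / \<bar>mj\<bar> - qq / d = qq * (d - \<bar>mj\<bar>) / (\<bar>mj\<bar> * d)"
          using mjp dp by (simp add: field_simps)
        then show ?thesis using qp dp mjp by (simp add: abs_divide abs_mult)
      qed
      also have "\<dots> \<le> qq * \<eta> n / (\<bar>mj\<bar> * (\<bar>mj\<bar> / 2))"
        using d1 d2 mjp qp by (intro frac_le mult_left_mono mult_mono) (auto simp: zero_less_mult_iff)
      also have "\<dots> = 2 * qq * \<eta> n / mj\<^sup>2" using mjp by (simp add: power2_eq_square field_simps)
      finally have f2: "\<bar>qq / \<bar>mj\<bar> - qq / d\<bar> \<le> 2 * qq * \<eta> n / mj\<^sup>2" .
      have "\<bar>qq - min T qq\<bar> / d \<le> max 0 (qq - T) / (\<bar>mj\<bar> / 2)"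
        using d1 mjp by (intro frac_le) auto
      also have "\<dots> = 2 * max 0 (qq - T) / \<bar>mj\<bar>" by simp
      finally have f3: "\<bar>qq - min T qq\<bar> / d \<le> 2 * max 0 (qq - T) / \<bar>mj\<bar>" .
      have "\<bar>vj + T * (- sgn vj * min 1 (qq / T)) / d\<bar> \<le> B n"
        using f1 f2 f3 unfolding B_def T_def by linarith
      then show "\<bar>vj + t n * (- sgn vj * min 1 (mj * vj / t n)) / \<bar>- mj + \<zeta>\<bar>\<bar> \<le> B n"
        unfolding T_def d_def qq_def .
    qed
  qed
  then show ?thesis using B0 by blast
qed




theorem mainTheorem14:
  fixes M :: "'a measure"
    and eps :: "nat \<Rightarrow> 'a \<Rightarrow> real"
    and X :: "nat \<Rightarrow> nat \<Rightarrow> real ^ 'p::finite"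
    and C :: "real ^ 'p ^ 'p"
    and \<sigma> :: real
    and lam :: "nat \<Rightarrow> 'p \<Rightarrow> real"
    and lam0 :: "'p \<Rightarrow> real"
    and \<psi> :: "'p \<Rightarrow> ereal"
    and Cset :: "(real ^ 'p) set"
  assumes M: "prob_space M"
    and eps_meas: "\<And>i. eps i \<in> borel_measurable M"
    and eps_indep: "prob_space.indep_vars M (\<lambda>_. borel) eps UNIV"
    and eps_ident: "\<And>i. distr M borel (eps i) = distr M borel (eps 0)"
    and eps_int: "integrable M (eps 0)"
    and eps_mean: "(\<integral>\<omega>. eps 0 \<omega> \<partial>M) = 0"
    and eps_sq_int: "integrable M (\<lambda>\<omega>. (eps 0 \<omega>)\<^sup>2)"
    and sigma_pos: "\<sigma> > 0"
    and eps_var: "(\<integral>\<omega>. (eps 0 \<omega>)\<^sup>2 \<partial>M) = \<sigma>\<^sup>2"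
    and rank: "\<And>n. n \<ge> CARD('p) \<Longrightarrow> full_col_rank X n"
    and C_lim: "(\<lambda>n. (1 / real n) *\<^sub>R gram X n) \<longlonglongrightarrow> C"
    and C_pd: "pos_def_mat C"
    and asy_normal: "conv_distr_to_density M
        (\<lambda>n \<omega>. sqrt (real n) *\<^sub>R (matrix_inv (gram X n) *v (\<Sum>i<n. eps i \<omega> *\<^sub>R X n i)))
        (gauss_density (\<sigma>\<^sup>2 *\<^sub>R matrix_inv C))"
    and LS_nonzero: "\<And>n \<beta> j. n \<ge> CARD('p) \<Longrightarrow>
        measure M {\<omega> \<in> space M. beta_LS X eps n \<beta> \<omega> $ j = 0} = 0"
    and lam_nonneg: "\<And>n j. lam n j \<ge> 0"
    and lam_pos_or_zero: "\<And>j. (\<forall>\<^sub>F n in sequentially. lam n j > 0) \<or>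
                               (\<forall>\<^sub>F n in sequentially. lam n j = 0)"
    and lamstar_n: "(\<lambda>n. lamstar lam n / real n) \<longlonglongrightarrow> 0"
    and lamstar_inf: "filterlim (lamstar lam) at_top sequentially"
    and lam0_lim: "\<And>j. (\<lambda>n. lam n j / lamstar lam n) \<longlonglongrightarrow> lam0 j"
    and lam0_range: "\<And>j. lam0 j \<in> {0..1}"
    and psi_lim: "\<And>j. (\<lambda>n. psi_ratio lam n j) \<longlonglongrightarrow> \<psi> j"
    and psi_range: "\<And>j. \<psi> j = 0 \<or> \<psi> j = \<infinity>"
    and Cset_closed: "closed Cset"
    and Cset_proper: "Cset \<subset> Mset C lam0 \<psi>"
  shows "(\<lambda>n. INF \<beta>. measure M {\<omega> \<in> space M.
            \<beta> \<in> (\<lambda>s. beta_AL X eps lam n \<beta> \<omega> - sqrt (lamstar lam n / real n) *\<^sub>R s) ` Cset})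
         \<longlonglongrightarrow> 0"
proof -
  interpret P: prob_space M by (rule M)
  define L where "L = lamstar lam"
  define Gn where "Gn n = (1 / real n) *\<^sub>R gram X n" for n
  obtain m where m: "m \<in> Mset C lam0 \<psi>" "m \<notin> Cset" using Cset_proper by blast
  define v where "v = C *v m"
  obtain \<delta> where \<delta>: "\<delta> > 0" "\<And>s. s \<in> Cset \<Longrightarrow> \<delta> \<le> norm (s - m)"
  proof -
    have "open (- Cset)" using Cset_closed by (simp add: open_Compl)
    then obtain e where "e > 0" "ball m e \<subseteq> - Cset" using m(2) by (meson ComplI open_contains_ball)
    then show ?thesis using that[of e] by (force simp: dist_norm norm_minus_commute subset_iff)
  qed
  obtain c1 where c1: "c1 > 0" "\<And>x. c1 * (norm x)\<^sup>2 \<le> x \<bullet> (C *v x)" using pd_lower[OF C_pd] by blast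
  define c0 where "c0 = c1 / 2"
  have c0: "c0 > 0" using c1 by (simp add: c0_def)
  have Gn_lim: "Gn \<longlonglongrightarrow> C" using C_lim by (simp add: Gn_def[abs_def])
  have Gdiff: "(\<lambda>n. \<Sum>i\<in>UNIV. \<Sum>j\<in>UNIV. \<bar>(Gn n - C) $ i $ j\<bar>) \<longlonglongrightarrow> 0"
  proof -
    have "(\<lambda>n. \<Sum>i\<in>UNIV. \<Sum>j\<in>UNIV. \<bar>Gn n $ i $ j - C $ i $ j\<bar>) \<longlonglongrightarrow> (\<Sum>i\<in>UNIV. \<Sum>j\<in>UNIV. \<bar>C $ i $ j - C $ i $ j\<bar>)"
      by (intro tendsto_intros tendsto_vec_nth Gn_lim)
    then show ?thesis by simp
  qed
  have Gsum: "(\<lambda>n. \<Sum>i\<in>UNIV. \<Sum>j\<in>UNIV. \<bar>Gn n $ i $ j\<bar>) \<longlonglongrightarrow> (\<Sum>i\<in>UNIV. \<Sum>j\<in>UNIV. \<bar>C $ i $ j\<bar>)"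
    by (intro tendsto_intros tendsto_vec_nth Gn_lim)
  have ev_lb: "\<forall>\<^sub>F n in sequentially. n \<ge> 1 \<and> (\<forall>d. real n * c0 * (norm d)\<^sup>2 \<le> (\<Sum>i<n. (X n i \<bullet> d)\<^sup>2))"
  proof -
    have "\<forall>\<^sub>F n in sequentially. (\<Sum>i\<in>UNIV. \<Sum>j\<in>UNIV. \<bar>(Gn n - C) $ i $ j\<bar>) < c0"
      using order_tendstoD(2)[OF Gdiff c0] .
    then show ?thesis using eventually_ge_at_top[of 1]
    proof eventually_elim
      case (elim n)
      have np: "real n > 0" using elim by simp
      show ?case
      proof (intro conjI allI)
        show "n \<ge> 1" using elim by simp
        fix d :: "real^'p"
        define S where "S = (\<Sum>i\<in>UNIV. \<Sum>j\<in>UNIV. \<bar>(Gn n - C) $ i $ j\<bar>)"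
        have "\<bar>d \<bullet> ((Gn n - C) *v d)\<bar> \<le> norm d * norm ((Gn n - C) *v d)" by (rule Cauchy_Schwarz_ineq2)
        also have "\<dots> \<le> norm d * (S * norm d)"
          unfolding S_def by (intro mult_left_mono mv_bound) auto
        also have "\<dots> \<le> norm d * (c0 * norm d)"
          using elim by (intro mult_left_mono mult_right_mono) (auto simp: S_def)
        finally have 1: "\<bar>d \<bullet> ((Gn n - C) *v d)\<bar> \<le> c0 * (norm d)\<^sup>2" by (simp add: power2_eq_square mult_ac)
        have 2: "d \<bullet> (Gn n *v d) = d \<bullet> (C *v d) + d \<bullet> ((Gn n - C) *v d)"
          by (simp add: matrix_vector_mult_diff_rdistrib inner_diff_right)
        have 3: "d \<bullet> (Gn n *v d) \<ge> c0 * (norm d)\<^sup>2"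
          using 1 2 c1(2)[of d] unfolding c0_def by linarith
        have 4: "(\<Sum>i<n. (X n i \<bullet> d)\<^sup>2) = real n * (d \<bullet> (Gn n *v d))"
          using np by (simp add: Gn_def gram_quad[symmetric] scaleR_matrix_vector_assoc[symmetric])
        show "real n * c0 * (norm d)\<^sup>2 \<le> (\<Sum>i<n. (X n i \<bullet> d)\<^sup>2)"
          unfolding 4 using 3 np by (simp add: mult.assoc)
      qed
    qed
  qed
  have Lpos: "\<forall>\<^sub>F n in sequentially. L n > 0"
    using lamstar_inf unfolding L_def filterlim_at_top_dense by blast
  have lam_le: "lam n j \<le> L n" for n j
    unfolding L_def lamstar_def by (rule Max_ge) auto
  have Lnn: "L n \<ge> 0" for n
    using lam_le[of n] lam_nonneg[of n] by (meson order_trans)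
  have sqrtL_inf: "filterlim (\<lambda>n. sqrt (L n)) at_top sequentially"
    unfolding L_def by (rule filterlim_compose[OF sqrt_at_top lamstar_inf])
  define t where "t n j = lam n j / L n" for n j
  define c where "c n = sqrt (L n / real n)" for n
  define \<gamma> where "\<gamma> n j = (if v$j = 0 then real n else if m$j * v$j \<le> 0 then - t n j / v$j else - m$j)" for n j
  define bet where "bet n = (\<chi> j. c n * \<gamma> n j)" for n
  define b0 where "b0 n = bet n + c n *\<^sub>R m" for n
  define sv where "sv n = (\<chi> j. if v$j = 0 then sgn (b0 n $ j) else if m$j * v$j \<le> 0 then - sgn (v$j)
       else - sgn (v$j) * min 1 (m$j * v$j / t n j))" for n
  have tnn: "t n j \<ge> 0" for n j unfolding t_def using lam_nonneg Lnn by simp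
  have psi0: "\<psi> j = 0" if "v$j \<noteq> 0" for j
  proof -
    have "\<psi> j \<noteq> \<infinity>" using m(1) that unfolding Mset_def v_def by auto
    then show ?thesis using psi_range[of j] by auto
  qed
  have mv_le: "m$j * v$j \<le> lam0 j" if "v$j \<noteq> 0" for j
    using m(1) psi0[OF that] unfolding Mset_def v_def by auto
  have ratio: "(\<forall>\<^sub>F n in sequentially. lam n j > 0) \<and> (\<lambda>n. sqrt (L n) / lam n j) \<longlonglongrightarrow> 0"
    if "v$j \<noteq> 0" for j
  proof -
    have pl: "(\<lambda>n. psi_ratio lam n j) \<longlonglongrightarrow> 0" using psi_lim[of j] psi0[OF that] by simp
    have "\<forall>\<^sub>F n in sequentially. psi_ratio lam n j < ereal 1"
      using order_tendstoD(2)[OF pl, of "ereal 1"] by simp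
    then have lp: "\<forall>\<^sub>F n in sequentially. lam n j > 0"
      by eventually_elim (use lam_nonneg in \<open>auto simp: psi_ratio_def less_le split: if_splits\<close>)
    have "(\<lambda>n. sqrt (L n) / lam n j) \<longlonglongrightarrow> 0"
    proof (rule order_tendstoI)
      fix a :: real assume "a < 0"
      then show "\<forall>\<^sub>F n in sequentially. a < sqrt (L n) / lam n j"
        using Lnn lam_nonneg by (intro always_eventually allI) (smt (verit) divide_nonneg_nonneg real_sqrt_ge_zero)
    next
      fix a :: real assume "a > 0"
      have "\<forall>\<^sub>F n in sequentially. psi_ratio lam n j < ereal a"
        using order_tendstoD(2)[OF pl, of "ereal a"] \<open>a > 0\<close> by simp
      with lp show "\<forall>\<^sub>F n in sequentially. sqrt (L n) / lam n j < a"
        by eventually_elim (auto simp: psi_ratio_def L_def)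
    qed
    with lp show ?thesis by blast
  qed
  have eta0: "(\<lambda>n. K / sqrt (L n)) \<longlonglongrightarrow> 0" for K
    by (rule tendsto_divide_0[OF tendsto_const filterlim_at_top_imp_at_infinity[OF sqrtL_inf]])
  have Bex: "\<exists>B. B \<longlonglongrightarrow> 0 \<and> (\<forall>\<^sub>F n in sequentially. \<forall>\<zeta>. \<bar>\<zeta>\<bar> \<le> K / sqrt (L n) \<longrightarrow>
      \<bar>v$j + t n j * sv n $ j / \<bar>\<gamma> n j + \<zeta>\<bar>\<bar> \<le> B n)" if K: "K > 0" for K j
  proof (cases "v$j = 0")
    case True
    have "\<forall>\<^sub>F n in sequentially. 0 \<le> t n j \<and> t n j \<le> 1"
      using Lpos by eventually_elim (auto simp: t_def tnn lam_le lam_nonneg)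
    from caseA_bound[OF eta0 this True] obtain B where B: "B \<longlonglongrightarrow> 0"
      "\<forall>\<^sub>F n in sequentially. \<forall>\<zeta> s. \<bar>\<zeta>\<bar> \<le> K / sqrt (L n) \<longrightarrow> \<bar>s\<bar> \<le> 1 \<longrightarrow>
            \<bar>v$j + t n j * s / \<bar>real n + \<zeta>\<bar>\<bar> \<le> B n" by blast
    have "\<forall>\<^sub>F n in sequentially. \<forall>\<zeta>. \<bar>\<zeta>\<bar> \<le> K / sqrt (L n) \<longrightarrow>
      \<bar>v$j + t n j * sv n $ j / \<bar>\<gamma> n j + \<zeta>\<bar>\<bar> \<le> B n"
      using B(2) by eventually_elim (auto simp: \<gamma>_def sv_def True abs_sgn_eq)
    with B(1) show ?thesis by blast
  next
    case vnz: False
    show ?thesis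
    proof (cases "m$j * v$j \<le> 0")
      case True
      obtain lp: "\<forall>\<^sub>F n in sequentially. lam n j > 0" and rl: "(\<lambda>n. sqrt (L n) / lam n j) \<longlonglongrightarrow> 0"
        using ratio[OF vnz] by blast
      have "\<forall>\<^sub>F n in sequentially. t n j > 0 \<and> K / sqrt (L n) \<le> K * (sqrt (L n) / lam n j) * t n j"
        using lp Lpos
      proof eventually_elim
        case (elim n)
        have sq: "sqrt (L n) * sqrt (L n) = L n" using elim by simp
        have "K * (sqrt (L n) / lam n j) * t n j = K / sqrt (L n)"
          using elim sq unfolding t_def by (simp add: field_simps)
        then show ?case using elim by (simp add: t_def)
      qed
      from caseB_bound[OF vnz tendsto_mult_right_zero[OF rl] this] obtain B where B: "B \<longlonglongrightarrow> 0"
        "\<forall>\<^sub>F n in sequentially. \<forall>\<zeta>. \<bar>\<zeta>\<bar> \<le> K / sqrt (L n) \<longrightarrow>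
            \<bar>v$j + t n j * (- sgn (v$j)) / \<bar>- t n j / v$j + \<zeta>\<bar>\<bar> \<le> B n" by blast
      have "\<forall>\<^sub>F n in sequentially. \<forall>\<zeta>. \<bar>\<zeta>\<bar> \<le> K / sqrt (L n) \<longrightarrow>
        \<bar>v$j + t n j * sv n $ j / \<bar>\<gamma> n j + \<zeta>\<bar>\<bar> \<le> B n"
        using B(2) by eventually_elim (auto simp: \<gamma>_def sv_def True vnz)
      with B(1) show ?thesis by blast
    next
      case False
      have q: "m$j * v$j > 0" using False by simp
      have tl: "(\<lambda>n. t n j) \<longlonglongrightarrow> lam0 j" using lam0_lim[of j] by (simp add: t_def L_def)
      from caseC_bound[OF q tl mv_le[OF vnz] eta0 tnn] obtain B where B: "B \<longlonglongrightarrow> 0"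
        "\<forall>\<^sub>F n in sequentially. \<forall>\<zeta>. \<bar>\<zeta>\<bar> \<le> K / sqrt (L n) \<longrightarrow>
            \<bar>v$j + t n j * (- sgn (v$j) * min 1 (m$j * v$j / t n j)) / \<bar>- m$j + \<zeta>\<bar>\<bar> \<le> B n" by blast
      have "\<forall>\<^sub>F n in sequentially. \<forall>\<zeta>. \<bar>\<zeta>\<bar> \<le> K / sqrt (L n) \<longrightarrow>
        \<bar>v$j + t n j * sv n $ j / \<bar>\<gamma> n j + \<zeta>\<bar>\<bar> \<le> B n"
        using B(2) by eventually_elim (auto simp: \<gamma>_def sv_def False vnz)
      with B(1) show ?thesis by blast
    qed
  qed
  have svprop: "sv n $ j * b0 n $ j = \<bar>b0 n $ j\<bar> \<and> \<bar>sv n $ j\<bar> \<le> 1" for n j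
  proof -
    have cnn: "c n \<ge> 0" unfolding c_def using Lnn[of n] by simp
    have b0j: "b0 n $ j = c n * \<gamma> n j + c n * m $ j" by (simp add: b0_def bet_def)
    show ?thesis
    proof (cases "v$j = 0")
      case True then show ?thesis by (simp add: sv_def sgn_if abs_sgn_eq)
    next
      case vnz: False
      show ?thesis
      proof (cases "m$j * v$j \<le> 0")
        case True
        have "(- sgn (v$j)) * (c n * (- t n j / v$j + m$j)) = \<bar>c n * (- t n j / v$j + m$j)\<bar>"
        proof (cases "v$j > 0")
          case vp: True
          then have "m$j \<le> 0" using True by (simp add: mult_le_0_iff)
          moreover have "t n j / v$j \<ge> 0" using vp tnn[of n j] by simp
          ultimately have "c n * (- t n j / v$j + m$j) \<le> 0" using cnn by (simp add: mult_le_0_iff)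
          then show ?thesis using vp by simp
        next
          case vn: False
          then have vn': "v$j < 0" using vnz by simp
          then have "m$j \<ge> 0" using True by (simp add: mult_le_0_iff)
          moreover have "t n j / v$j \<le> 0" using vn' tnn[of n j] by (simp add: divide_nonneg_neg)
          ultimately have "c n * (- t n j / v$j + m$j) \<ge> 0" using cnn by simp
          then show ?thesis using vn' by simp
        qed
        moreover have "b0 n $ j = c n * (- t n j / v$j + m$j)"
          using b0j True vnz by (simp add: \<gamma>_def algebra_simps)
        moreover have "sv n $ j = - sgn (v$j)" using True vnz by (simp add: sv_def)
        ultimately show ?thesis using vnz by (simp add: abs_sgn_eq)
      next
        case False
        have "m$j * v$j / t n j \<ge> 0" using False tnn[of n j] by simp
        then show ?thesis using False vnz b0j by (simp add: sv_def \<gamma>_def abs_mult)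
      qed
    qed
  qed
  define Zf where "Zf n \<omega> = sqrt (real n) *\<^sub>R (matrix_inv (gram X n) *v (\<Sum>i<n. eps i \<omega> *\<^sub>R X n i))" for n \<omega>
  have Zcomp: "Zf n \<omega> $ j = (\<Sum>i<n. (sqrt (real n) * (matrix_inv (gram X n) *v X n i) $ j) * eps i \<omega>)" for n \<omega> j
    by (simp add: Zf_def vec.sum matrix_vector_mult_scaleR sum_component sum_distrib_left mult_ac)
  have Zmeas: "(\<lambda>\<omega>. Zf n \<omega> $ j) \<in> borel_measurable M" for n j
    unfolding Zcomp by (intro borel_measurable_sum borel_measurable_times borel_measurable_const eps_meas)
  have moment: "integrable M (\<lambda>\<omega>. \<Sum>j\<in>UNIV. (Zf n \<omega> $ j)\<^sup>2) \<and>
      (\<integral>\<omega>. (\<Sum>j\<in>UNIV. (Zf n \<omega> $ j)\<^sup>2) \<partial>M) \<le> real CARD('p) * \<sigma>\<^sup>2 / c0"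
    if lb1: "n \<ge> 1" and lb: "\<forall>d. real n * c0 * (norm d)\<^sup>2 \<le> (\<Sum>i<n. (X n i \<bullet> d)\<^sup>2)" for n
  proof -
    define A where "A = matrix_inv (gram X n)"
    have np: "real n > 0" using lb1 by simp
    have lbq: "\<And>d. (real n * c0) * (norm d)\<^sup>2 \<le> d \<bullet> (gram X n *v d)"
      using lb by (simp add: gram_quad)
    have kp: "real n * c0 > 0" using np c0 by simp
    have inv: "invertible (gram X n)" by (rule invertible_lb[OF lbq kp])
    have AG: "A ** gram X n = mat 1" using inv_props(2)[OF inv] by (simp add: A_def)
    have rowsum: "(\<Sum>i<n. ((A *v X n i) $ j)\<^sup>2) \<le> 1 / (real n * c0)" for j
    proof -
      have 1: "(A *v x) $ j = (A $ j) \<bullet> x" for x by (simp add: matrix_vector_mult_def inner_vec_def)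
      have 2: "gram X n *v (A $ j) = axis j 1"
      proof -
        have sym: "gram X n $ k $ l = gram X n $ l $ k" for k l by (simp add: gram_def mult.commute)
        have "(gram X n *v (A $ j)) $ k = (A ** gram X n) $ j $ k" for k
          by (simp add: matrix_vector_mult_def matrix_matrix_mult_def sym mult.commute)
        then show ?thesis using AG by (simp add: vec_eq_iff mat_def axis_def)
      qed
      have "(\<Sum>i<n. ((A *v X n i) $ j)\<^sup>2) = (A $ j) \<bullet> (gram X n *v (A $ j))"
        by (simp add: 1 gram_quad inner_commute)
      also have "\<dots> = A $ j $ j" by (simp add: 2 inner_axis)
      also have "A $ j $ j = axis j 1 \<bullet> (A *v axis j 1)"
        by (simp add: inner_axis' matrix_vector_mult_basis column_def)
      also have "\<dots> \<le> (norm (axis j (1::real)))\<^sup>2 / (real n * c0)"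
        unfolding A_def by (rule inv_quad_bound[OF lbq kp])
      finally show ?thesis by simp
    qed
    have each: "integrable M (\<lambda>\<omega>. (Zf n \<omega> $ j)\<^sup>2) \<and>
        (\<integral>\<omega>. (Zf n \<omega> $ j)\<^sup>2 \<partial>M) = \<sigma>\<^sup>2 * (\<Sum>i<n. (sqrt (real n) * (A *v X n i) $ j)\<^sup>2)" for j
      unfolding Zcomp A_def
      by (rule P.second_moment[OF eps_meas eps_indep eps_ident eps_int eps_mean eps_sq_int eps_var])
    have eachb: "(\<integral>\<omega>. (Zf n \<omega> $ j)\<^sup>2 \<partial>M) \<le> \<sigma>\<^sup>2 / c0" for j
    proof -
      have "(\<Sum>i<n. (sqrt (real n) * (A *v X n i) $ j)\<^sup>2) = real n * (\<Sum>i<n. ((A *v X n i) $ j)\<^sup>2)"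
        using np by (simp add: power_mult_distrib sum_distrib_left)
      also have "\<dots> \<le> real n * (1 / (real n * c0))"
        using rowsum[of j] np by (intro mult_left_mono) auto
      also have "\<dots> = 1 / c0" using np by simp
      finally have "(\<Sum>i<n. (sqrt (real n) * (A *v X n i) $ j)\<^sup>2) \<le> 1 / c0" .
      then have "\<sigma>\<^sup>2 * (\<Sum>i<n. (sqrt (real n) * (A *v X n i) $ j)\<^sup>2) \<le> \<sigma>\<^sup>2 * (1 / c0)"
        by (intro mult_left_mono) auto
      then show ?thesis using each[of j] by simp
    qed
    have int: "integrable M (\<lambda>\<omega>. \<Sum>j\<in>UNIV. (Zf n \<omega> $ j)\<^sup>2)"
      using each by simp
    have "(\<integral>\<omega>. (\<Sum>j\<in>UNIV. (Zf n \<omega> $ j)\<^sup>2) \<partial>M) = (\<Sum>j\<in>UNIV. \<integral>\<omega>. (Zf n \<omega> $ j)\<^sup>2 \<partial>M)"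
      using each by (simp add: integral_sum)
    also have "\<dots> \<le> (\<Sum>j\<in>(UNIV::'p set). \<sigma>\<^sup>2 / c0)" by (intro sum_mono eachb)
    also have "\<dots> = real CARD('p) * \<sigma>\<^sup>2 / c0" by simp
    finally show ?thesis using int by blast
  qed
  show ?thesis
  proof (rule tendstoI)
    fix r :: real assume r: "r > 0"
    define K where "K = max 1 (2 * real CARD('p) * \<sigma>\<^sup>2 / (c0 * r))"
    have K1: "K \<ge> 1" by (simp add: K_def)
    then have K: "K > 0" by simp
    have Kb: "real CARD('p) * \<sigma>\<^sup>2 / c0 / K\<^sup>2 < r"
    proof -
      have "K\<^sup>2 \<ge> K" using K1 by (simp add: power2_eq_square)
      moreover have "K \<ge> 2 * real CARD('p) * \<sigma>\<^sup>2 / (c0 * r)" by (simp add: K_def)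
      ultimately have "K\<^sup>2 \<ge> 2 * real CARD('p) * \<sigma>\<^sup>2 / (c0 * r)" by linarith
      then have "K\<^sup>2 * (c0 * r) \<ge> 2 * real CARD('p) * \<sigma>\<^sup>2" using c0 r by (simp add: field_simps)
      moreover have "real CARD('p) * \<sigma>\<^sup>2 > 0" using sigma_pos by simp
      ultimately have "real CARD('p) * \<sigma>\<^sup>2 < K\<^sup>2 * (c0 * r)" by linarith
      then show ?thesis using c0 K by (simp add: field_simps)
    qed
    have "\<forall>j. \<exists>B. B \<longlonglongrightarrow> 0 \<and> (\<forall>\<^sub>F n in sequentially. \<forall>\<zeta>. \<bar>\<zeta>\<bar> \<le> K / sqrt (L n) \<longrightarrow>
      \<bar>v$j + t n j * sv n $ j / \<bar>\<gamma> n j + \<zeta>\<bar>\<bar> \<le> B n)" using Bex[OF K] by blast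
    from choice[OF this] obtain B where BB: "\<forall>j. B j \<longlonglongrightarrow> 0 \<and> (\<forall>\<^sub>F n in sequentially. \<forall>\<zeta>. \<bar>\<zeta>\<bar> \<le> K / sqrt (L n) \<longrightarrow>
      \<bar>v$j + t n j * sv n $ j / \<bar>\<gamma> n j + \<zeta>\<bar>\<bar> \<le> B j n)" by blast
    have B: "\<And>j. B j \<longlonglongrightarrow> 0" "\<And>j. \<forall>\<^sub>F n in sequentially. \<forall>\<zeta>. \<bar>\<zeta>\<bar> \<le> K / sqrt (L n) \<longrightarrow>
      \<bar>v$j + t n j * sv n $ j / \<bar>\<gamma> n j + \<zeta>\<bar>\<bar> \<le> B j n" using BB by blast+
    define D where "D n = (\<Sum>j\<in>UNIV. B j n) + (\<Sum>i\<in>UNIV. \<Sum>j\<in>UNIV. \<bar>(Gn n - C) $ i $ j\<bar>) * norm m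
        + (\<Sum>i\<in>UNIV. \<Sum>j\<in>UNIV. \<bar>Gn n $ i $ j\<bar>) * (K / sqrt (L n))" for n
    have "D \<longlonglongrightarrow> 0 + 0 * norm m + (\<Sum>i\<in>UNIV. \<Sum>j\<in>UNIV. \<bar>C $ i $ j\<bar>) * 0"
      unfolding D_def[abs_def] by (intro tendsto_intros tendsto_null_sum B Gdiff Gsum eta0)
    then have D0: "D \<longlonglongrightarrow> 0" by simp
    have evD: "\<forall>\<^sub>F n in sequentially. D n < \<delta> * c0 / 2"
      using order_tendstoD(2)[OF D0, of "\<delta> * c0 / 2"] \<delta>(1) c0 by simp
    have evB: "\<forall>\<^sub>F n in sequentially. \<forall>j. \<forall>\<zeta>. \<bar>\<zeta>\<bar> \<le> K / sqrt (L n) \<longrightarrow>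
      \<bar>v$j + t n j * sv n $ j / \<bar>\<gamma> n j + \<zeta>\<bar>\<bar> \<le> B j n"
      by (rule eventually_all_finite) (use B(2) in blast)
    from ev_lb Lpos evD evB show "\<forall>\<^sub>F n in sequentially. dist (INF \<beta>. measure M {\<omega> \<in> space M.
            \<beta> \<in> (\<lambda>s. beta_AL X eps lam n \<beta> \<omega> - sqrt (lamstar lam n / real n) *\<^sub>R s) ` Cset}) 0 < r"
    proof eventually_elim
      case (elim n)
      have det: "bet n \<notin> (\<lambda>s. beta_AL X eps lam n (bet n) \<omega> - sqrt (lamstar lam n / real n) *\<^sub>R s) ` Cset"
        if \<omega>: "\<omega> \<in> space M" and Zs: "(\<Sum>j\<in>UNIV. (Zf n \<omega> $ j)\<^sup>2) < K\<^sup>2" for \<omega>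
      proof
        assume mem: "bet n \<in> (\<lambda>s. beta_AL X eps lam n (bet n) \<omega> - sqrt (lamstar lam n / real n) *\<^sub>R s) ` Cset"
        define G where "G = gram X n"
        define A where "A = matrix_inv G"
        define S where "S = (\<Sum>i<n. eps i \<omega> *\<^sub>R X n i)"
        define Z where "Z = Zf n \<omega>"
        define bh where "bh = beta_LS X eps n (bet n) \<omega>"
        define ba where "ba = beta_AL X eps lam n (bet n) \<omega>"
        have np: "real n > 0" using elim by simp
        have Ln: "L n > 0" using elim by simp
        have sLn: "sqrt (L n) > 0" using Ln by simp
        have snp: "sqrt (real n) > 0" using np by simp
        have cdef: "c n = sqrt (L n) / sqrt (real n)" by (simp add: c_def real_sqrt_divide)
        have cpos: "c n > 0" using sLn snp cdef by simp
        have lbq: "\<And>d. (real n * c0) * (norm d)\<^sup>2 \<le> d \<bullet> (G *v d)" using elim by (simp add: G_def gram_quad)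
        have kp: "real n * c0 > 0" using np c0 by simp
        have inv: "invertible G" by (rule invertible_lb[OF lbq kp])
        have GA: "G ** A = mat 1" and AG: "A ** G = mat 1" using inv_props[OF inv] by (simp_all add: A_def)
        have nZ: "norm Z < K"
        proof -
          have "(norm Z)\<^sup>2 = (\<Sum>j\<in>UNIV. (Z $ j)\<^sup>2)" unfolding power2_norm_eq_inner inner_vec_def by (simp add: power2_eq_square)
          then have "(norm Z)\<^sup>2 < K\<^sup>2" using Zs by (simp add: Z_def)
          then show ?thesis by (rule power2_less_imp_less[OF _ less_imp_le[OF K]])
        qed
        have Zdef: "Z = sqrt (real n) *\<^sub>R (A *v S)" by (simp add: Z_def Zf_def A_def G_def S_def)
        have AS: "A *v S = (1 / sqrt (real n)) *\<^sub>R Z" using snp by (simp add: Zdef)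
        have bh: "bh = bet n + A *v S"
        proof -
          have "(\<Sum>i<n. resp X eps n (bet n) \<omega> i *\<^sub>R X n i) = G *v bet n + S"
            by (simp add: resp_def G_def gram_mult S_def scaleR_add_left sum.distrib inner_commute)
          then show ?thesis
            by (simp add: bh_def beta_LS_def A_def[symmetric] G_def[symmetric] matrix_vector_right_distrib
                matrix_vector_mul_assoc AG)
        qed
        define \<zeta> where "\<zeta> j = Z $ j / sqrt (L n)" for j
        have \<zeta>b: "\<bar>\<zeta> j\<bar> \<le> K / sqrt (L n)" for j
        proof -
          have "\<bar>Z $ j\<bar> \<le> K" using component_le_norm_cart[of Z j] nZ by simp
          then show ?thesis unfolding \<zeta>_def using sLn by (simp add: abs_divide divide_right_mono)
        qed
        have bhj: "bh $ j = c n * (\<gamma> n j + \<zeta> j)" for j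
          using sLn snp by (simp add: bh AS bet_def cdef \<zeta>_def field_simps)
        have ncc: "real n * (c n * c n) = L n" using np Ln by (simp add: c_def)
        define w where "w j = lam n j / \<bar>bh $ j\<bar>" for j
        have wnn: "w j \<ge> 0" for j by (simp add: w_def lam_nonneg)
        have wid: "w j * sv n $ j / (real n * c n) = t n j * sv n $ j / \<bar>\<gamma> n j + \<zeta> j\<bar>" for j
        proof (cases "\<gamma> n j + \<zeta> j = 0")
          case True then show ?thesis by (simp add: w_def bhj)
        next
          case False
          define a where "a = \<bar>\<gamma> n j + \<zeta> j\<bar>"
          have ap: "a > 0" using False by (simp add: a_def)
          have ab: "\<bar>bh $ j\<bar> = c n * a" using cpos by (simp add: bhj abs_mult a_def)
          have "w j * sv n $ j / (real n * c n) = lam n j * sv n $ j / ((real n * (c n * c n)) * a)"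
            unfolding w_def ab using cpos np ap by (simp add: field_simps)
          also have "\<dots> = lam n j * sv n $ j / (L n * a)" by (simp add: ncc)
          also have "\<dots> = t n j * sv n $ j / a" using Ln ap by (simp add: t_def field_simps)
          finally show ?thesis by (simp add: a_def)
        qed
        have obj: "AL_obj X eps lam n (bet n) \<omega> b = (\<Sum>i<n. (resp X eps n (bet n) \<omega> i - X n i \<bullet> b)\<^sup>2)
             + 2 * (\<Sum>j\<in>UNIV. w j * \<bar>b $ j\<bar>)" for b
          by (simp add: AL_obj_def w_def bh_def)
        define e where "e = - 2 *\<^sub>R (\<Sum>i<n. (resp X eps n (bet n) \<omega> i - X n i \<bullet> b0 n) *\<^sub>R X n i)
            + 2 *\<^sub>R (\<chi> j. w j * sv n $ j)"
        have sub: "\<bar>b0 n $ j\<bar> + sv n $ j * (x - b0 n $ j) \<le> \<bar>x\<bar>" for j x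
        proof -
          have "sv n $ j * x \<le> \<bar>sv n $ j\<bar> * \<bar>x\<bar>" by (metis abs_ge_self abs_mult)
          also have "\<dots> \<le> \<bar>x\<bar>" using svprop[of n j] by (simp add: mult_left_le_one_le)
          finally show ?thesis using svprop[of n j] by (simp add: algebra_simps)
        qed
        have ineq: "AL_obj X eps lam n (bet n) \<omega> (b0 n) + e \<bullet> (b - b0 n) + (real n * c0) * (norm (b - b0 n))\<^sup>2
            \<le> AL_obj X eps lam n (bet n) \<omega> b" for b
          unfolding obj e_def
          by (rule obj_ineq[where x="X n" and r="resp X eps n (bet n) \<omega>" and w=w and s="sv n", OF sub wnn])
            (use elim in simp)
        have cont: "continuous_on UNIV (AL_obj X eps lam n (bet n) \<omega>)"
        proof -
          have "AL_obj X eps lam n (bet n) \<omega> = (\<lambda>b. (\<Sum>i<n. (resp X eps n (bet n) \<omega> i - X n i \<bullet> b)\<^sup>2)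
             + 2 * (\<Sum>j\<in>UNIV. w j * \<bar>b $ j\<bar>))" using obj by (intro ext) simp
          then show ?thesis by (simp; intro continuous_intros)
        qed
        have exmin: "\<exists>b. \<forall>b'. AL_obj X eps lam n (bet n) \<omega> b \<le> AL_obj X eps lam n (bet n) \<omega> b'"
          by (rule argmin_bound(1)[OF ineq kp cont])
        have bamin: "\<forall>b'. AL_obj X eps lam n (bet n) \<omega> ba \<le> AL_obj X eps lam n (bet n) \<omega> b'"
          unfolding ba_def beta_AL_def by (rule someI_ex[OF exmin])
        have dbound: "norm (ba - b0 n) \<le> norm e / (real n * c0)"
          by (rule argmin_bound(2)[OF ineq kp cont bamin])
        define W where "W = (\<chi> j. w j * sv n $ j)"
        have rdiff: "resp X eps n (bet n) \<omega> i - X n i \<bullet> b0 n = eps i \<omega> - c n * (X n i \<bullet> m)" for i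
          by (simp add: resp_def b0_def inner_add_right)
        have GZ: "S = (1 / sqrt (real n)) *\<^sub>R (G *v Z)"
        proof -
          have "S = G *v (A *v S)" by (simp add: matrix_vector_mul_assoc GA)
          then show ?thesis by (simp add: AS matrix_vector_mult_scaleR)
        qed
        have esum: "(\<Sum>i<n. (resp X eps n (bet n) \<omega> i - X n i \<bullet> b0 n) *\<^sub>R X n i) = S - c n *\<^sub>R (G *v m)"
          by (simp add: rdiff scaleR_diff_left sum_subtractf S_def G_def gram_mult scaleR_sum_right)
        define V where "V = ((Gn n - C) *v m) - Gn n *v ((1 / sqrt (L n)) *\<^sub>R Z) + (C *v m + (1 / (real n * c n)) *\<^sub>R W)"
        have Gnx: "Gn n *v x = (1 / real n) *\<^sub>R (G *v x)" for x
          by (simp add: Gn_def G_def scaleR_matrix_vector_assoc)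
        have eV: "e = (2 * real n * c n) *\<^sub>R V"
        proof -
          have e': "e = - 2 *\<^sub>R ((1 / sqrt (real n)) *\<^sub>R (G *v Z) - c n *\<^sub>R (G *v m)) + 2 *\<^sub>R W"
            unfolding e_def esum GZ W_def by simp
          have V': "V = (1 / real n) *\<^sub>R (G *v m) - ((1 / real n) * (1 / sqrt (L n))) *\<^sub>R (G *v Z)
              + (1 / (real n * c n)) *\<^sub>R W"
            unfolding V_def by (simp add: matrix_vector_mult_diff_rdistrib Gnx matrix_vector_mult_scaleR algebra_simps)
          show ?thesis unfolding e' V' using np sLn snp by (simp add: vec_eq_iff cdef field_simps)
        qed
        define SG1 where "SG1 = (\<Sum>i\<in>UNIV. \<Sum>j\<in>UNIV. \<bar>(Gn n - C) $ i $ j\<bar>)"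
        define SG2 where "SG2 = (\<Sum>i\<in>UNIV. \<Sum>j\<in>UNIV. \<bar>Gn n $ i $ j\<bar>)"
        have N1: "norm ((Gn n - C) *v m) \<le> SG1 * norm m" unfolding SG1_def by (rule mv_bound)
        have N2: "norm (Gn n *v ((1 / sqrt (L n)) *\<^sub>R Z)) \<le> SG2 * (K / sqrt (L n))"
        proof -
          have "norm (Gn n *v ((1 / sqrt (L n)) *\<^sub>R Z)) \<le> SG2 * norm ((1 / sqrt (L n)) *\<^sub>R Z)"
            unfolding SG2_def by (rule mv_bound)
          also have "\<dots> \<le> SG2 * (K / sqrt (L n))"
            using nZ sLn by (intro mult_left_mono) (auto simp: SG2_def divide_right_mono intro!: sum_nonneg)
          finally show ?thesis .
        qed
        have N3: "norm (C *v m + (1 / (real n * c n)) *\<^sub>R W) \<le> (\<Sum>j\<in>UNIV. B j n)"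
        proof -
          have "norm (C *v m + (1 / (real n * c n)) *\<^sub>R W) \<le> (\<Sum>j\<in>UNIV. \<bar>(C *v m + (1 / (real n * c n)) *\<^sub>R W) $ j\<bar>)"
            by (rule norm_le_l1_cart)
          also have "\<dots> \<le> (\<Sum>j\<in>UNIV. B j n)"
          proof (rule sum_mono)
            fix j
            have "(C *v m + (1 / (real n * c n)) *\<^sub>R W) $ j = v$j + t n j * sv n $ j / \<bar>\<gamma> n j + \<zeta> j\<bar>"
              using wid[of j] by (simp add: v_def W_def)
            then show "\<bar>(C *v m + (1 / (real n * c n)) *\<^sub>R W) $ j\<bar> \<le> B j n"
              using elim \<zeta>b[of j] by simp
          qed
          finally show ?thesis .
        qed
        have normV: "norm V \<le> D n"
        proof -
          have "norm V \<le> norm ((Gn n - C) *v m) + norm (Gn n *v ((1 / sqrt (L n)) *\<^sub>R Z))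
              + norm (C *v m + (1 / (real n * c n)) *\<^sub>R W)"
            unfolding V_def using norm_triangle_ineq[of "(Gn n - C) *v m - Gn n *v ((1 / sqrt (L n)) *\<^sub>R Z)"
                "C *v m + (1 / (real n * c n)) *\<^sub>R W"]
              norm_triangle_ineq4[of "(Gn n - C) *v m" "Gn n *v ((1 / sqrt (L n)) *\<^sub>R Z)"] by linarith
          then show ?thesis using N1 N2 N3 unfolding D_def SG1_def SG2_def by linarith
        qed
        have ne: "norm e = 2 * real n * c n * norm V" using np cpos by (simp add: eV)
        have "norm (ba - b0 n) \<le> 2 * real n * c n * norm V / (real n * c0)" using dbound ne by simp
        also have "\<dots> = 2 * c n * norm V / c0" using np by (simp add: field_simps)
        also have "\<dots> < c n * \<delta>"
        proof -
          have "norm V < \<delta> * c0 / 2" using normV elim by linarith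
          then have "2 * c n * norm V < 2 * c n * (\<delta> * c0 / 2)" using cpos by simp
          then show ?thesis using c0 by (simp add: field_simps)
        qed
        finally have lt: "norm (ba - b0 n) < c n * \<delta>" .
        from mem obtain s where s: "s \<in> Cset" and bs: "bet n = ba - c n *\<^sub>R s"
          by (auto simp: ba_def c_def L_def)
        have "ba - b0 n = c n *\<^sub>R (s - m)" using bs by (simp add: b0_def algebra_simps)
        then have "norm (ba - b0 n) = c n * norm (s - m)" using cpos by simp
        also have "\<dots> \<ge> c n * \<delta>" using \<delta>(2)[OF s] cpos by simp
        finally show False using lt by simp
      qed
      define bad where "bad = {\<omega> \<in> space M. K\<^sup>2 \<le> (\<Sum>j\<in>UNIV. (Zf n \<omega> $ j)\<^sup>2)}"
      have bad_sets: "bad \<in> sets M" unfolding bad_def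
        by (intro borel_measurable_le borel_measurable_const borel_measurable_sum borel_measurable_power Zmeas)
      have sub: "{\<omega> \<in> space M. bet n \<in> (\<lambda>s. beta_AL X eps lam n (bet n) \<omega> - sqrt (lamstar lam n / real n) *\<^sub>R s) ` Cset}
          \<subseteq> bad"
        using det unfolding bad_def by (auto simp: not_less[symmetric])
      obtain mi: "integrable M (\<lambda>\<omega>. \<Sum>j\<in>UNIV. (Zf n \<omega> $ j)\<^sup>2)"
          and mb: "(\<integral>\<omega>. (\<Sum>j\<in>UNIV. (Zf n \<omega> $ j)\<^sup>2) \<partial>M) \<le> real CARD('p) * \<sigma>\<^sup>2 / c0"
        using moment[of n] elim by blast
      have "measure M bad \<le> (\<integral>\<omega>. (\<Sum>j\<in>UNIV. (Zf n \<omega> $ j)\<^sup>2) \<partial>M) / K\<^sup>2"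
        unfolding bad_def using K
        by (intro integral_Markov_inequality_measure[OF mi, where A="space M"]) (auto intro!: AE_I2 sum_nonneg)
      also have "\<dots> \<le> real CARD('p) * \<sigma>\<^sup>2 / c0 / K\<^sup>2"
        using mb K by (intro divide_right_mono) auto
      finally have mbad: "measure M bad < r" using Kb by linarith
      define f where "f \<beta> = measure M {\<omega> \<in> space M.
            \<beta> \<in> (\<lambda>s. beta_AL X eps lam n \<beta> \<omega> - sqrt (lamstar lam n / real n) *\<^sub>R s) ` Cset}" for \<beta>
      have bdd: "bdd_below (range f)" by (rule bdd_belowI[of _ 0]) (auto simp: f_def)
      have "(INF \<beta>. f \<beta>) \<le> f (bet n)" by (rule cINF_lower[OF bdd]) simp
      also have "\<dots> \<le> measure M bad" unfolding f_def by (rule P.finite_measure_mono[OF sub bad_sets])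
      finally have up: "(INF \<beta>. f \<beta>) < r" using mbad by linarith
      have lo: "(INF \<beta>. f \<beta>) \<ge> 0" by (rule cINF_greatest) (auto simp: f_def)
      show ?case using up lo unfolding f_def by (simp add: dist_real_def)
    qed
  qed
qed

end
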